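(* Consider the setting and Batching SVRG algorithm described in the context, with step sizes $\sigma_\theta = \frac{\lambda_{\min}}{6\kappa(Q)^2 L_G^2}$ and $\sigma_\omega = \beta\sigma_\theta$, where $\beta = \frac{8\lambda_{\max}(\hat A^\top \hat C^{-1}\hat A)}{\lambda_{\min}(\hat C)}$, and number of inner iterations $K = \frac{2}{\sigma_\theta\lambda_{\min}} = \frac{12\kappa(Q)^2L_G^2}{\lambda_{\min}^2}$. Assume $\hat A$ is nonsingular and $\hat C$ is positive definite. Then for every epoch $m$, $$\mathbb{E}\|Q^{-1}\Delta_{m+1}\|^2 \le \frac{2}{3}\,\mathbb{E}\|Q^{-1}\Delta_m\|^2 + 2\,\frac{1-\sigma_\theta\lambda_{\min}}{\lambda_{\min}^2}\,\mathbb{E}\|Q^{-1}e_m\|^2 .$$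
   Context: Data: $n$ transitions $(s_t,a_t,r_t,s_{t+1})$, $t\in[n]=\{1,\dots,n\}$, a feature map $\phi$ from states to $\mathbb{R}^d$ and a discount factor $\gamma$. Define $\hat A_t=\phi(s_t)(\phi(s_t)-\gamma\phi(s_{t+1}))^\top$, $\hat b_t=r_t\phi(s_t)$, $\hat C_t=\phi(s_t)\phi(s_t)^\top$, and let $\hat A,\hat b,\hat C$ be their averages over $t\in[n]$. Under the assumption that $\hat A$ is nonsingular and $\hat C$ positive definite, the saddle-point problem $\min_\theta\max_\omega \langle \hat b-\hat A\theta,\omega\rangle-\frac12\omega^\top\hat C\omega$ (equivalent to minimizing the empirical MSPBE $\frac12\|\hat A\theta-\hat b\|^2_{\hat C^{-1}}$) has the unique solution $(\theta^\star,\omega^\star)=(\hat A^{-1}\hat b,0)$. Let $\beta=\frac{8\lambda_{\max}(\hat A^\top\hat C^{-1}\hat A)}{\lambda_{\min}(\hat C)}$. For $t\in[n]$ set $G_t=\begin{pmatrix}0&-\sqrt\beta\hat A_t^\top\\ \sqrt\beta\hat A_t&\beta\hat C_t\end{pmatrix}$, $g_t=\begin{pmatrix}0\\ \sqrt\beta\hat b_t\end{pmatrix}$, and let $G=\frac1n\sum_t G_t$, $g=\frac1n\sum_t g_t$. Put $z^\star=(\theta^\star,\omega^\star/\sqrt\beta)$; then $Gz^\star=g$. With this $\beta$, $G$ is diagonalizable with all eigenvalues real and positive; fix a factorization $G=Q\Lambda Q^{-1}$ with $\Lambda$ diagonal. $\lambda_{\min}$ denotes the smallest eigenvalue of $G$;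 $\|\cdot\|$ is the Euclidean norm for vectors and the spectral norm for matrices; $\kappa(Q)=\|Q\|\|Q^{-1}\|$; $L_G^2=\left\|\frac1n\sum_{t=1}^n G_t^\top G_t\right\|$. Batching SVRG (written in the coordinates $z=(\theta,\omega/\sqrt\beta)$, with step sizes $\sigma_\theta$ for $\theta$ and $\sigma_\omega=\beta\sigma_\theta$ for $\omega$): at the start of epoch $m$ the current iterate is $z_m$. A subset $\mathcal B_m\subseteq[n]$ of size $B_m$ is sampled uniformly at random, and $G_m=\frac1{B_m}\sum_{t\in\mathcal B_m}G_t$, $g_m=\frac1{B_m}\sum_{t\in\mathcal B_m}g_t$. Set $z_{m,0}=z_m$ and for $j=0,\dots,K-1$ sample $t_j$ uniformly from $[n]$ (independently of everything else) and set $z_{m,j+1}=z_{m,j}-\sigma_\theta\big(G_{t_j}z_{m,j}+(G_m-G_{t_j})z_m-g_m\big)$; then $z_{m+1}=z_{m,K}$. Define $\Delta_m=z_m-z^\star$ and the mini-batch error $e_m=(Gz_m-g)-(G_mz_m-g_m)$. Expectations are over all randomness of the algorithm. *)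

theory Defs
  imports "HOL-Probability.Probability"
begin

definition outer :: "real^'n \<Rightarrow> real^'m \<Rightarrow> real^'m^'n" where
  "outer x y = (\<chi> i j. x$i * y$j)"

definition avg :: "nat \<Rightarrow> (nat \<Rightarrow> 'a::real_vector) \<Rightarrow> 'a" where
  "avg n f = (1 / real n) *\<^sub>R (\<Sum>t\<in>{1..n}. f t)"

definition bavg :: "nat set \<Rightarrow> (nat \<Rightarrow> 'a::real_vector) \<Rightarrow> 'a" where
  "bavg S f = (1 / real (card S)) *\<^sub>R (\<Sum>t\<in>S. f t)"

definition At :: "('s \<Rightarrow> real^'d) \<Rightarrow> (nat \<Rightarrow> 's) \<Rightarrow> real \<Rightarrow> nat \<Rightarrow> real^'d^'d" where
  "At \<phi> s \<gamma> t = outer (\<phi> (s t)) (\<phi> (s t) - \<gamma> *\<^sub>R \<phi> (s (Suc t)))"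

definition bt :: "('s \<Rightarrow> real^'d) \<Rightarrow> (nat \<Rightarrow> 's) \<Rightarrow> (nat \<Rightarrow> real) \<Rightarrow> nat \<Rightarrow> real^'d" where
  "bt \<phi> s r t = r t *\<^sub>R \<phi> (s t)"

definition Ct :: "('s \<Rightarrow> real^'d) \<Rightarrow> (nat \<Rightarrow> 's) \<Rightarrow> nat \<Rightarrow> real^'d^'d" where
  "Ct \<phi> s t = outer (\<phi> (s t)) (\<phi> (s t))"

definition real_eigenvalues :: "real^'n^'n \<Rightarrow> real set" where
  "real_eigenvalues M = {l. \<exists>v. v \<noteq> 0 \<and> M *v v = l *\<^sub>R v}"

definition lam_max :: "real^'n^'n \<Rightarrow> real" where
  "lam_max M = Max (real_eigenvalues M)"

definition lam_min :: "real^'n^'n \<Rightarrow> real" where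
  "lam_min M = Min (real_eigenvalues M)"

definition pos_def :: "real^'n^'n \<Rightarrow> bool" where
  "pos_def M \<longleftrightarrow> transpose M = M \<and> (\<forall>v. v \<noteq> 0 \<longrightarrow> v \<bullet> (M *v v) > 0)"

definition diagonal_mat :: "real^'n^'n \<Rightarrow> bool" where
  "diagonal_mat M \<longleftrightarrow> (\<forall>i j. i \<noteq> j \<longrightarrow> M $ i $ j = 0)"

definition spec_norm :: "real^'n^'m \<Rightarrow> real" where
  "spec_norm M = onorm (\<lambda>x. M *v x)"

text \<open>Block matrix [[0, -sqrt b A^T],[sqrt b A, b C]] and block vector (x,y).\<close>
definition bmat :: "real \<Rightarrow> real^'d^'d \<Rightarrow> real^'d^'d \<Rightarrow> real^('d+'d)^('d+'d)" where
  "bmat \<beta> A C = (\<chi> i j. (case i of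
       Inl a \<Rightarrow> (case j of Inl b \<Rightarrow> 0 | Inr b \<Rightarrow> - sqrt \<beta> * A$b$a)
     | Inr a \<Rightarrow> (case j of Inl b \<Rightarrow> sqrt \<beta> * A$a$b | Inr b \<Rightarrow> \<beta> * C$a$b)))"

definition bvec :: "real^'d \<Rightarrow> real^'d \<Rightarrow> real^('d+'d)" where
  "bvec x y = (\<chi> i. (case i of Inl a \<Rightarrow> x$a | Inr a \<Rightarrow> y$a))"

definition batch_pmf :: "nat \<Rightarrow> nat \<Rightarrow> nat set pmf" where
  "batch_pmf n b = pmf_of_set {S. S \<subseteq> {1..n} \<and> card S = b}"

primrec inner_dist :: "(nat \<Rightarrow> real^'k^'k) \<Rightarrow> nat \<Rightarrow> real \<Rightarrow> real^'k^'k \<Rightarrow> real^'k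
     \<Rightarrow> real^'k \<Rightarrow> nat \<Rightarrow> (real^'k) pmf" where
  "inner_dist Gs n \<sigma> Gm gm zm 0 = return_pmf zm"
| "inner_dist Gs n \<sigma> Gm gm zm (Suc j) =
     bind_pmf (inner_dist Gs n \<sigma> Gm gm zm j)
       (\<lambda>w. map_pmf (\<lambda>t. w - \<sigma> *\<^sub>R (Gs t *v w + (Gm - Gs t) *v zm - gm)) (pmf_of_set {1..n}))"

text \<open>Distribution of the epoch iterate z_m of Batching SVRG started at z0, batch sizes B.\<close>
primrec epoch_dist :: "(nat \<Rightarrow> real^'k^'k) \<Rightarrow> (nat \<Rightarrow> real^'k) \<Rightarrow> nat \<Rightarrow> real \<Rightarrow> nat
     \<Rightarrow> (nat \<Rightarrow> nat) \<Rightarrow> real^'k \<Rightarrow> nat \<Rightarrow> (real^'k) pmf" where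
  "epoch_dist Gs gs n \<sigma> K B z0 0 = return_pmf z0"
| "epoch_dist Gs gs n \<sigma> K B z0 (Suc m) =
     bind_pmf (epoch_dist Gs gs n \<sigma> K B z0 m) (\<lambda>z.
       bind_pmf (batch_pmf n (B m)) (\<lambda>S. inner_dist Gs n \<sigma> (bavg S Gs) (bavg S gs) z K))"

text \<open>Distribution of the mini-batch error e_m = (G z_m - g) - (G_m z_m - g_m).\<close>
definition err_dist :: "(nat \<Rightarrow> real^'k^'k) \<Rightarrow> (nat \<Rightarrow> real^'k) \<Rightarrow> nat \<Rightarrow> real \<Rightarrow> nat
     \<Rightarrow> (nat \<Rightarrow> nat) \<Rightarrow> real^'k \<Rightarrow> nat \<Rightarrow> (real^'k) pmf" where
  "err_dist Gs gs n \<sigma> K B z0 m =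
     bind_pmf (epoch_dist Gs gs n \<sigma> K B z0 m) (\<lambda>z.
       map_pmf (\<lambda>S. (avg n Gs *v z - avg n gs) - (bavg S Gs *v z - bavg S gs)) (batch_pmf n (B m)))"


definition Ahat :: "('s \<Rightarrow> real^'d) \<Rightarrow> (nat \<Rightarrow> 's) \<Rightarrow> real \<Rightarrow> nat \<Rightarrow> real^'d^'d" where
  "Ahat \<phi> s \<gamma> n = avg n (At \<phi> s \<gamma>)"

definition bhat :: "('s \<Rightarrow> real^'d) \<Rightarrow> (nat \<Rightarrow> 's) \<Rightarrow> (nat \<Rightarrow> real) \<Rightarrow> nat \<Rightarrow> real^'d" where
  "bhat \<phi> s r n = avg n (bt \<phi> s r)"

definition Chat :: "('s \<Rightarrow> real^'d) \<Rightarrow> (nat \<Rightarrow> 's) \<Rightarrow> nat \<Rightarrow> real^'d^'d" where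
  "Chat \<phi> s n = avg n (Ct \<phi> s)"

definition beta :: "('s \<Rightarrow> real^'d) \<Rightarrow> (nat \<Rightarrow> 's) \<Rightarrow> real \<Rightarrow> nat \<Rightarrow> real" where
  "beta \<phi> s \<gamma> n = 8 * lam_max (transpose (Ahat \<phi> s \<gamma> n) ** matrix_inv (Chat \<phi> s n) ** Ahat \<phi> s \<gamma> n)
                    / lam_min (Chat \<phi> s n)"

definition Gt :: "('s \<Rightarrow> real^'d) \<Rightarrow> (nat \<Rightarrow> 's) \<Rightarrow> real \<Rightarrow> nat \<Rightarrow> nat \<Rightarrow> real^('d+'d)^('d+'d)" where
  "Gt \<phi> s \<gamma> n t = bmat (beta \<phi> s \<gamma> n) (At \<phi> s \<gamma> t) (Ct \<phi> s t)"

definition gt :: "('s \<Rightarrow> real^'d) \<Rightarrow> (nat \<Rightarrow> 's) \<Rightarrow> (nat \<Rightarrow> real) \<Rightarrow> real \<Rightarrow> nat \<Rightarrow> nat \<Rightarrow> real^('d+'d)" where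
  "gt \<phi> s r \<gamma> n t = bvec 0 (sqrt (beta \<phi> s \<gamma> n) *\<^sub>R bt \<phi> s r t)"

definition Gbar :: "('s \<Rightarrow> real^'d) \<Rightarrow> (nat \<Rightarrow> 's) \<Rightarrow> real \<Rightarrow> nat \<Rightarrow> real^('d+'d)^('d+'d)" where
  "Gbar \<phi> s \<gamma> n = avg n (Gt \<phi> s \<gamma> n)"

text \<open>z* = (theta*, omega*/sqrt beta) with theta* = Ahat^-1 bhat, omega* = 0.\<close>
definition zstar :: "('s \<Rightarrow> real^'d) \<Rightarrow> (nat \<Rightarrow> 's) \<Rightarrow> (nat \<Rightarrow> real) \<Rightarrow> real \<Rightarrow> nat \<Rightarrow> real^('d+'d)" where
  "zstar \<phi> s r \<gamma> n = bvec (matrix_inv (Ahat \<phi> s \<gamma> n) *v bhat \<phi> s r n) 0"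

definition lminG :: "('s \<Rightarrow> real^'d) \<Rightarrow> (nat \<Rightarrow> 's) \<Rightarrow> real \<Rightarrow> nat \<Rightarrow> real" where
  "lminG \<phi> s \<gamma> n = lam_min (Gbar \<phi> s \<gamma> n)"

definition kappa :: "real^'k^'k \<Rightarrow> real" where
  "kappa Q = spec_norm Q * spec_norm (matrix_inv Q)"

definition LG2 :: "('s \<Rightarrow> real^'d) \<Rightarrow> (nat \<Rightarrow> 's) \<Rightarrow> real \<Rightarrow> nat \<Rightarrow> real" where
  "LG2 \<phi> s \<gamma> n = spec_norm (avg n (\<lambda>t. transpose (Gt \<phi> s \<gamma> n t) ** Gt \<phi> s \<gamma> n t))"

definition sigma_theta :: "('s \<Rightarrow> real^'d) \<Rightarrow> (nat \<Rightarrow> 's) \<Rightarrow> real \<Rightarrow> nat \<Rightarrow> real^('d+'d)^('d+'d) \<Rightarrow> real" where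
  "sigma_theta \<phi> s \<gamma> n Q = lminG \<phi> s \<gamma> n / (6 * (kappa Q)\<^sup>2 * LG2 \<phi> s \<gamma> n)"

end

theory Submission
  imports Defs
begin

lemma minv:
  assumes "invertible (A::real^'n^'n)"
  shows "A ** matrix_inv A = mat 1" "matrix_inv A ** A = mat 1"
  using someI_ex[OF assms[unfolded invertible_def]] unfolding matrix_inv_def by auto

lemma spec_norm_le: "norm (M *v x) \<le> spec_norm M * norm x"
  unfolding spec_norm_def by (rule onorm[OF matrix_vector_mul_bounded_linear])

lemma spec_norm_nonneg: "0 \<le> spec_norm M"
  unfolding spec_norm_def by (rule onorm_pos_le[OF matrix_vector_mul_bounded_linear])

lemma sym_inner:
  fixes M :: "real^'n^'n"
  assumes "transpose M = M"
  shows "x \<bullet> (M *v y) = (M *v x) \<bullet> y"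
proof -
  have "x \<bullet> (M *v y) = (x v* M) \<bullet> y" by (simp add: dot_lmul_matrix)
  also have "x v* M = transpose M *v x" by simp
  finally show ?thesis using assms by simp
qed

lemma sym_eig_finite:
  fixes M :: "real^'n^'n"
  assumes sym: "transpose M = M"
  shows "finite (real_eigenvalues M)"
proof -
  define E where "E = real_eigenvalues M"
  define ev where "ev l = (SOME v. v \<noteq> 0 \<and> M *v v = l *\<^sub>R v)" for l
  have ev: "ev l \<noteq> 0 \<and> M *v ev l = l *\<^sub>R ev l" if "l \<in> E" for l
    using someI_ex[of "\<lambda>v. v \<noteq> 0 \<and> M *v v = l *\<^sub>R v"] that
    unfolding E_def real_eigenvalues_def ev_def by auto
  have orth: "ev l1 \<bullet> ev l2 = 0" if "l1 \<in> E" "l2 \<in> E" "l1 \<noteq> l2" for l1 l2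
  proof -
    have "l1 * (ev l1 \<bullet> ev l2) = (M *v ev l1) \<bullet> ev l2" using ev[OF that(1)] by simp
    also have "\<dots> = ev l1 \<bullet> (M *v ev l2)" using sym_inner[OF sym] by simp
    also have "\<dots> = l2 * (ev l1 \<bullet> ev l2)" using ev[OF that(2)] by simp
    finally show ?thesis using that(3) by simp
  qed
  have inj: "inj_on ev E"
  proof (rule inj_onI)
    fix a b assume ab: "a \<in> E" "b \<in> E" "ev a = ev b"
    show "a = b"
    proof (rule ccontr)
      assume "a \<noteq> b"
      then have "ev a \<bullet> ev b = 0" by (rule orth[OF ab(1,2)])
      then have "ev b \<bullet> ev b = 0" using ab(3) by simp
      then show False using ev[OF ab(2)] by simp
    qed
  qed
  have "pairwise orthogonal (ev ` E)"
    unfolding pairwise_def orthogonal_def using orth by auto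
  moreover have "0 \<notin> ev ` E" using ev by auto
  ultimately have "independent (ev ` E)" by (rule pairwise_orthogonal_independent)
  then have "finite (ev ` E)" using independent_bound by auto
  then show ?thesis using inj finite_imageD unfolding E_def by blast
qed

lemma scaleR_mv: "(c *\<^sub>R A) *v x = c *\<^sub>R (A *v (x::real^'n))"
  by (simp add: matrix_vector_mult_def vec_eq_iff sum_distrib_left mult.assoc)

lemma sum_mv: "(\<Sum>t\<in>S. A t) *v x = (\<Sum>t\<in>S. A t *v (x::real^'n))"
  apply (simp add: matrix_vector_mult_def vec_eq_iff sum_distrib_right sum_component)
  apply (subst sum.swap) apply simp done

lemma sym_eig_nonempty:
  fixes M :: "real^'n^'n"
  assumes sym: "transpose M = M"
  shows "real_eigenvalues M \<noteq> {}"
proof -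
  define q where "q v = v \<bullet> (M *v v)" for v :: "real^'n"
  have "continuous_on (sphere 0 1) q" unfolding q_def
    by (intro continuous_intros linear_continuous_on matrix_vector_mul_bounded_linear)
  moreover have "sphere (0::real^'n) 1 \<noteq> {}"
    by (metis mem_sphere_0 norm_axis_1 empty_iff)
  ultimately obtain v where v: "v \<in> sphere 0 1" and vmin: "\<And>u. u \<in> sphere 0 1 \<Longrightarrow> q v \<le> q u"
    using continuous_attains_inf[OF compact_sphere] by metis
  define m where "m = q v"
  define N where "N = M - m *\<^sub>R mat 1"
  have Nv: "N *v u = M *v u - m *\<^sub>R u" for u
    unfolding N_def by (simp add: matrix_vector_mult_diff_rdistrib scaleR_mv)
  have symN: "transpose N = N" unfolding N_def using sym
    by (simp add: transpose_def vec_eq_iff mat_def)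
  have nv1: "norm v = 1" using v by simp
  have psd: "u \<bullet> (N *v u) \<ge> 0" for u
  proof (cases "u = 0")
    case True then show ?thesis by simp
  next
    case False
    define w where "w = (1 / norm u) *\<^sub>R u"
    have "w \<in> sphere 0 1" using False unfolding w_def by simp
    then have "m \<le> q w" using vmin m_def by simp
    also have "q w = (1 / norm u)^2 * (u \<bullet> (M *v u))"
      unfolding q_def w_def by (simp add: power2_eq_square matrix_vector_mult_scaleR)
    finally have "m * (norm u)^2 \<le> u \<bullet> (M *v u)"
      using False by (simp add: field_simps)
    moreover have "u \<bullet> (N *v u) = u \<bullet> (M *v u) - m * (norm u)^2"
      by (simp add: Nv inner_diff_right power2_norm_eq_inner)
    ultimately show ?thesis by simp
  qed
  have v0: "v \<bullet> (N *v v) = 0"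
    using nv1 by (simp add: Nv inner_diff_right power2_norm_eq_inner[symmetric] m_def q_def)
  define c where "c = N *v v"
  define d where "d = c \<bullet> (N *v c)"
  have d0: "d \<ge> 0" using psd d_def by simp
  have key: "0 \<le> 2 * t * (c \<bullet> c) + t^2 * d" for t
  proof -
    have "0 \<le> (v + t *\<^sub>R c) \<bullet> (N *v (v + t *\<^sub>R c))" by (rule psd)
    also have "\<dots> = v \<bullet> (N *v v) + t * (v \<bullet> (N *v c)) + t * (c \<bullet> (N *v v)) + t^2 * d"
      by (simp add: matrix_vector_right_distrib matrix_vector_mult_scaleR inner_add_left
          inner_add_right d_def power2_eq_square algebra_simps)
    also have "v \<bullet> (N *v c) = c \<bullet> c" using sym_inner[OF symN, of v c] c_def by (simp add: inner_commute)
    finally show ?thesis using v0 c_def by simp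
  qed
  have "c \<bullet> c = 0"
  proof (rule ccontr)
    assume ne: "c \<bullet> c \<noteq> 0"
    then have pos: "c \<bullet> c > 0" by (simp add: order_le_neq_trans[OF inner_ge_zero] )
    define cc where "cc = c \<bullet> c"
    define t where "t = - cc / (d + 1)"
    have tneg: "t < 0" using pos d0 unfolding t_def cc_def by simp
    have "d / (d+1) \<le> 1" using d0 by simp
    moreover have "cc > 0" using pos cc_def by simp
    ultimately have "cc * (d / (d+1)) \<le> cc * 1" by (intro mult_left_mono) auto
    then have "t * d \<ge> - cc" unfolding t_def by (simp add: field_simps)
    then have "2 * cc + t * d > 0" using \<open>cc > 0\<close> by linarith
    then have "t * (2 * cc + t * d) < 0" using tneg by (simp add: mult_neg_pos)
    moreover have "2 * t * (c \<bullet> c) + t^2 * d = t * (2 * cc + t * d)"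
      unfolding cc_def by (simp add: power2_eq_square algebra_simps)
    ultimately show False using key[of t] by simp
  qed
  then have "M *v v = m *\<^sub>R v" using c_def Nv by simp
  moreover have "v \<noteq> 0" using nv1 by auto
  ultimately show ?thesis unfolding real_eigenvalues_def by blast
qed

lemma pd_eig_pos:
  fixes M :: "real^'n^'n"
  assumes "\<forall>v. v \<noteq> 0 \<longrightarrow> v \<bullet> (M *v v) > 0" and "l \<in> real_eigenvalues M"
  shows "l > 0"
proof -
  obtain v where v: "v \<noteq> 0" "M *v v = l *\<^sub>R v" using assms(2) unfolding real_eigenvalues_def by auto
  have "0 < v \<bullet> (M *v v)" using assms(1) v by auto
  also have "\<dots> = l * (v \<bullet> v)" using v by simp
  moreover have "v \<bullet> v > 0" using v by simp
  ultimately show ?thesis by (simp add: zero_less_mult_iff)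
qed

lemma sym_pd_lam:
  fixes M :: "real^'n^'n"
  assumes "transpose M = M" "\<forall>v. v \<noteq> 0 \<longrightarrow> v \<bullet> (M *v v) > 0"
  shows "lam_min M > 0" "lam_max M > 0"
proof -
  have f: "finite (real_eigenvalues M)" and ne: "real_eigenvalues M \<noteq> {}"
    using sym_eig_finite sym_eig_nonempty assms by auto
  show "lam_min M > 0" unfolding lam_min_def
    using Min_in[OF f ne] pd_eig_pos[OF assms(2)] by blast
  show "lam_max M > 0" unfolding lam_max_def
    using Max_in[OF f ne] pd_eig_pos[OF assms(2)] by blast
qed

lemma sum_UNIV_plus:
  fixes f :: "('a::finite + 'b::finite) \<Rightarrow> 'c::comm_monoid_add"
  shows "(\<Sum>j\<in>UNIV. f j) = (\<Sum>a\<in>UNIV. f (Inl a)) + (\<Sum>b\<in>UNIV. f (Inr b))"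
  by (subst UNIV_Plus_UNIV[symmetric], subst sum.Plus) (auto simp: comp_def)

lemma bvec_Inl[simp]: "bvec x y $ Inl a = x $ a" and bvec_Inr[simp]: "bvec x y $ Inr a = y $ a"
  by (simp_all add: bvec_def)

definition zl :: "real^('d+'d) \<Rightarrow> real^'d" where "zl z = (\<chi> a. z $ Inl a)"
definition zr :: "real^('d+'d) \<Rightarrow> real^'d" where "zr z = (\<chi> a. z $ Inr a)"

lemma bvec_split: "z = bvec (zl z) (zr z)"
  by (simp add: vec_eq_iff zl_def zr_def bvec_def split: sum.split)

lemma bvec_eq_iff: "bvec x y = bvec u v \<longleftrightarrow> x = u \<and> y = v"
  by (auto simp: vec_eq_iff bvec_def split: sum.split)

lemma bvec_zero[simp]: "bvec 0 0 = 0"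
  by (simp add: vec_eq_iff bvec_def split: sum.split)

lemma bvec_add: "bvec x y + bvec u v = bvec (x + u) (y + v)"
  by (simp add: vec_eq_iff bvec_def split: sum.split)

lemma bvec_diff: "bvec x y - bvec u v = bvec (x - u) (y - v)"
  by (simp add: vec_eq_iff bvec_def split: sum.split)

lemma bvec_scale: "c *\<^sub>R bvec x y = bvec (c *\<^sub>R x) (c *\<^sub>R y)"
  by (simp add: vec_eq_iff bvec_def split: sum.split)

lemma bvec_inner: "bvec x y \<bullet> bvec u v = x \<bullet> u + y \<bullet> v"
  unfolding inner_vec_def by (subst sum_UNIV_plus) simp

lemma bmat_mv:
  "bmat \<beta> A C *v bvec x y =
     bvec (- (sqrt \<beta> *\<^sub>R (transpose A *v y))) (sqrt \<beta> *\<^sub>R (A *v x) + \<beta> *\<^sub>R (C *v y))"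
proof -
  have "(bmat \<beta> A C *v bvec x y) $ i = bvec (- (sqrt \<beta> *\<^sub>R (transpose A *v y))) (sqrt \<beta> *\<^sub>R (A *v x) + \<beta> *\<^sub>R (C *v y)) $ i" for i
    unfolding matrix_vector_mult_def
    by (cases i) (simp_all add: sum_UNIV_plus bmat_def transpose_def sum_negf sum_distrib_left
        mult.assoc)
  then show ?thesis by (simp add: vec_eq_iff)
qed

lemma avg_component: "avg n f $ i = avg n (\<lambda>t. f t $ i)"
  unfolding avg_def by simp

lemma avg_scaleR: "avg n (\<lambda>t. c *\<^sub>R f t) = c *\<^sub>R avg n f"
  unfolding avg_def by (simp add: scaleR_sum_right)

lemma avg_add: "avg n (\<lambda>t. f t + g t) = avg n f + avg n g"
  unfolding avg_def by (simp add: sum.distrib scaleR_add_right)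

lemma avg_diff: "avg n (\<lambda>t. f t - g t) = avg n f - avg n g"
  unfolding avg_def by (simp add: sum_subtractf scaleR_diff_right)

lemma avg_const: "n \<ge> 1 \<Longrightarrow> avg n (\<lambda>t. c) = c"
  unfolding avg_def by (simp add: sum_constant_scaleR)

lemma mv_sum: "M *v (\<Sum>t\<in>S. f t) = (\<Sum>t\<in>S. M *v (f t::real^'k))"
  by (rule linear_sum[OF matrix_vector_mul_linear])

lemma avg_mv: "avg n f *v x = avg n (\<lambda>t. f t *v (x::real^'k))"
  unfolding avg_def by (simp add: scaleR_mv sum_mv)

lemma mv_avg: "M *v avg n f = avg n (\<lambda>t. M *v (f t::real^'k))"
  unfolding avg_def by (simp add: matrix_vector_mult_scaleR mv_sum)

lemma avg_bmat: "avg n (\<lambda>t. bmat \<beta> (A t) (C t)) = bmat \<beta> (avg n A) (avg n C)"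
  by (simp add: vec_eq_iff avg_component bmat_def split: sum.split)
     (simp add: avg_def sum_distrib_left sum_negf)

lemma avg_bvec: "avg n (\<lambda>t. bvec (x t) (y t)) = bvec (avg n x) (avg n y)"
  by (simp add: vec_eq_iff avg_component bvec_def split: sum.split)

lemma avg_zero: "avg n (\<lambda>t. 0) = 0"
  unfolding avg_def by simp

lemma avg_inner_left: "avg n (\<lambda>t. f t \<bullet> m) = avg n f \<bullet> (m::real^'k)"
  unfolding avg_def by (simp add: inner_sum_left)

lemma avg_real_add: "avg n (\<lambda>t. (f t::real) + g t) = avg n f + avg n g"
  by (rule avg_add)

lemma avg_mono: "(\<And>t. f t \<le> (g t::real)) \<Longrightarrow> avg n f \<le> avg n g"
  unfolding avg_def by (auto intro!: divide_right_mono sum_mono)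

lemma avg_cmul: "avg n (\<lambda>t. c * (f t::real)) = c * avg n f"
  using avg_scaleR[of n c f] by simp

lemma avg_var:
  fixes a :: "nat \<Rightarrow> real^'k"
  assumes "n \<ge> 1"
  shows "avg n (\<lambda>t. (norm (a t))\<^sup>2) = (norm (avg n a))\<^sup>2 + avg n (\<lambda>t. (norm (a t - avg n a))\<^sup>2)"
proof -
  define m where "m = avg n a"
  have "(norm (a t))\<^sup>2 = (norm (a t - m))\<^sup>2 + 2 * ((a t - m) \<bullet> m) + (norm m)\<^sup>2" for t
  proof -
    show ?thesis
      by (simp only: power2_norm_eq_inner) (simp add: inner_diff_left inner_diff_right inner_commute algebra_simps)
  qed
  then have "avg n (\<lambda>t. (norm (a t))\<^sup>2) = avg n (\<lambda>t. (norm (a t - m))\<^sup>2 + 2 * ((a t - m) \<bullet> m) + (norm m)\<^sup>2)"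
    by simp
  also have "\<dots> = avg n (\<lambda>t. (norm (a t - m))\<^sup>2) + 2 * avg n (\<lambda>t. (a t - m) \<bullet> m) + (norm m)\<^sup>2"
    using assms by (simp add: avg_add avg_cmul avg_const)
  also have "avg n (\<lambda>t. (a t - m) \<bullet> m) = 0"
    using assms by (simp add: avg_inner_left avg_diff avg_const m_def)
  finally show ?thesis unfolding m_def by simp
qed

lemma young:
  fixes a b :: "'a::real_inner"
  assumes "\<eta> > 0"
  shows "(norm (a + b))\<^sup>2 \<le> (1 + \<eta>) * (norm a)\<^sup>2 + (1 + 1/\<eta>) * (norm b)\<^sup>2"
proof -
  have "0 \<le> (norm (\<eta> *\<^sub>R a - b))\<^sup>2" by simp
  also have "\<dots> = \<eta>^2 * (norm a)\<^sup>2 - 2 * \<eta> * (a \<bullet> b) + (norm b)\<^sup>2"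
    by (simp only: power2_norm_eq_inner) (simp add: inner_diff_left inner_diff_right inner_commute power2_eq_square algebra_simps)
  finally have "2 * \<eta> * (a \<bullet> b) \<le> \<eta>^2 * (norm a)\<^sup>2 + (norm b)\<^sup>2" by simp
  then have "2 * (a \<bullet> b) \<le> \<eta> * (norm a)\<^sup>2 + (1/\<eta>) * (norm b)\<^sup>2"
    using assms by (simp add: field_simps power2_eq_square)
  moreover have "(norm (a + b))\<^sup>2 = (norm a)\<^sup>2 + 2 * (a \<bullet> b) + (norm b)\<^sup>2"
    by (simp add: power2_norm_eq_inner inner_add_left inner_add_right inner_commute)
  ultimately show ?thesis by (simp add: algebra_simps)
qed

lemma norm_diff_sq_le: "(norm (x - y))\<^sup>2 \<le> 2 * (norm x)\<^sup>2 + 2 * (norm (y::'a::real_inner))\<^sup>2"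
proof -
  have "0 \<le> (norm (x + y))\<^sup>2" by simp
  then show ?thesis
    by (simp add: power2_norm_eq_inner inner_add_left inner_add_right inner_diff_left inner_diff_right inner_commute)
qed

lemma diag_mv: "diagonal_mat L \<Longrightarrow> (L *v x) $ i = L$i$i * x$i"
  unfolding diagonal_mat_def matrix_vector_mult_def
  by (simp add: sum.remove[of UNIV i] sum.neutral)

lemma norm_sq_vec: "(norm (x::real^'k))\<^sup>2 = (\<Sum>i\<in>UNIV. (x$i)\<^sup>2)"
  by (simp only: power2_norm_eq_inner) (simp add: inner_vec_def power2_eq_square)

lemma contract:
  assumes "diagonal_mat L" "\<And>i. tau \<le> sig * L$i$i" "\<And>i. sig * L$i$i \<le> 1"
  shows "(norm (x - sig *\<^sub>R (L *v x)))\<^sup>2 \<le> (1 - tau)\<^sup>2 * (norm x)\<^sup>2"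
proof -
  have "(norm (x - sig *\<^sub>R (L *v x)))\<^sup>2 = (\<Sum>i\<in>UNIV. ((1 - sig * L$i$i) * x$i)\<^sup>2)"
    unfolding norm_sq_vec using diag_mv[OF assms(1)] by (simp add: algebra_simps)
  also have "\<dots> \<le> (\<Sum>i\<in>UNIV. (1 - tau)\<^sup>2 * (x$i)\<^sup>2)"
  proof (rule sum_mono)
    fix i
    have "0 \<le> 1 - sig * L$i$i" "1 - sig * L$i$i \<le> 1 - tau" using assms(2,3)[of i] by auto
    then have "(1 - sig * L$i$i)\<^sup>2 \<le> (1 - tau)\<^sup>2" by (simp add: power_mono)
    then show "((1 - sig * L$i$i) * x$i)\<^sup>2 \<le> (1 - tau)\<^sup>2 * (x$i)\<^sup>2"
      by (simp add: power_mult_distrib mult_right_mono)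
  qed
  also have "\<dots> = (1 - tau)\<^sup>2 * (norm x)\<^sup>2" by (simp add: norm_sq_vec sum_distrib_left)
  finally show ?thesis .
qed

lemma norm_mv_sq: "(norm (M *v x))\<^sup>2 \<le> (spec_norm M)\<^sup>2 * (norm x)\<^sup>2"
proof -
  have "norm (M *v x) \<le> spec_norm M * norm x" by (rule spec_norm_le)
  then have "(norm (M *v x))\<^sup>2 \<le> (spec_norm M * norm x)\<^sup>2" by (simp add: power_mono)
  then show ?thesis by (simp add: power_mult_distrib)
qed

lemma step_bound:
  fixes Gs :: "nat \<Rightarrow> real^'k^'k" and Gm :: "real^'k^'k" and gm zm w :: "real^'k"
  assumes n1: "n \<ge> 1"
   and Gdef: "G = avg n Gs"
   and zs: "G *v zs = g"
   and QP: "Q ** P = mat 1"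
   and PG: "P ** G = L ** P"
   and diag: "diagonal_mat L"
   and lo: "\<And>i. sig * lam \<le> sig * L$i$i" and hi: "\<And>i. sig * L$i$i \<le> 1"
   and noise: "\<And>u. avg n (\<lambda>t. (norm (Gs t *v u))\<^sup>2) \<le> L2 * (norm u)\<^sup>2"
   and L2: "L2 \<ge> 0"
   and kap: "sig\<^sup>2 * (spec_norm P * spec_norm Q)\<^sup>2 * L2 = sig * lam / 6"
   and tau: "sig * lam \<ge> 0"
   and eta: "\<eta> > 0"
  defines "e \<equiv> (G *v zm - g) - (Gm *v zm - gm)"
  shows "avg n (\<lambda>t. (norm (P *v (w - sig *\<^sub>R (Gs t *v w + (Gm - Gs t) *v zm - gm) - zs)))\<^sup>2)
         \<le> ((1+\<eta>)*(1 - sig*lam)\<^sup>2 + sig*lam/3) * (norm (P *v (w - zs)))\<^sup>2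
           + (sig*lam/3) * (norm (P *v (zm - zs)))\<^sup>2 + (1 + 1/\<eta>) * sig\<^sup>2 * (norm (P *v e))\<^sup>2"
proof -
  define x where "x = P *v (w - zs)"
  define y where "y = P *v (zm - zs)"
  define p where "p = P *v e"
  define v where "v t = Gs t *v w + (Gm - Gs t) *v zm - gm" for t
  define a where "a t = P *v (w - sig *\<^sub>R v t - zs)" for t
  define tau where "tau = sig * lam"
  have a_eq: "a t = x - sig *\<^sub>R (P *v v t)" for t
    unfolding a_def x_def by (simp add: algebra_simps)
  have v_eq: "v t = Gs t *v (w - zm) + G *v (zm - zs) - e" for t
    unfolding v_def e_def using zs
    by (simp add: algebra_simps matrix_vector_mult_diff_rdistrib matrix_vector_mult_diff_distrib)
  have avgGs: "avg n (\<lambda>t. Gs t *v u) = G *v u" for u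
    unfolding Gdef by (simp add: avg_mv)
  have avg_v: "avg n v = G *v (w - zs) - e"
  proof -
    have "avg n v = avg n (\<lambda>t. Gs t *v (w - zm)) + avg n (\<lambda>t. G *v (zm - zs)) - avg n (\<lambda>t. e)"
      unfolding v_eq by (simp add: avg_add avg_diff)
    also have "\<dots> = G *v (w - zm) + G *v (zm - zs) - e" using n1 by (simp add: avgGs avg_const)
    also have "\<dots> = G *v (w - zs) - e" by (simp add: algebra_simps matrix_vector_mult_diff_distrib)
    finally show ?thesis .
  qed
  have PGx: "P *v (G *v u) = L *v (P *v u)" for u
    by (simp add: matrix_vector_mul_assoc PG)
  have avg_a: "avg n a = (x - sig *\<^sub>R (L *v x)) + sig *\<^sub>R p"
  proof -
    have "avg n a = x - sig *\<^sub>R (P *v avg n v)"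
      unfolding a_eq using n1 by (simp add: avg_diff avg_const avg_scaleR mv_avg)
    also have "P *v avg n v = L *v x - p"
      unfolding avg_v x_def p_def by (simp add: matrix_vector_mult_diff_distrib PGx)
    finally show ?thesis by (simp add: algebra_simps)
  qed
  have Qxy: "Q *v (x - y) = w - zm"
    unfolding x_def y_def by (simp add: matrix_vector_mult_diff_distrib matrix_vector_mul_assoc QP)
  have dev: "a t - avg n a = - sig *\<^sub>R (P *v ((Gs t - G) *v (Q *v (x - y))))" for t
  proof -
    have "a t - avg n a = - sig *\<^sub>R (P *v (v t - avg n v))"
      unfolding a_eq using n1 by (simp add: avg_diff avg_const avg_scaleR mv_avg algebra_simps)
    also have "v t - avg n v = (Gs t - G) *v (w - zm)"
      unfolding avg_v v_eq by (simp add: algebra_simps matrix_vector_mult_diff_rdistrib matrix_vector_mult_diff_distrib)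
    finally show ?thesis unfolding Qxy .
  qed
  have var: "avg n (\<lambda>t. (norm (a t))\<^sup>2) = (norm (avg n a))\<^sup>2 + avg n (\<lambda>t. (norm (a t - avg n a))\<^sup>2)"
    by (rule avg_var[OF n1])
  have b1: "(norm (avg n a))\<^sup>2 \<le> (1+\<eta>) * (1 - tau)\<^sup>2 * (norm x)\<^sup>2 + (1 + 1/\<eta>) * sig\<^sup>2 * (norm p)\<^sup>2"
  proof -
    have "(norm (avg n a))\<^sup>2 \<le> (1+\<eta>) * (norm (x - sig *\<^sub>R (L *v x)))\<^sup>2 + (1 + 1/\<eta>) * (norm (sig *\<^sub>R p))\<^sup>2"
      unfolding avg_a by (rule young[OF eta])
    also have "(norm (x - sig *\<^sub>R (L *v x)))\<^sup>2 \<le> (1 - tau)\<^sup>2 * (norm x)\<^sup>2"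
      by (rule contract[OF diag]) (use lo hi tau_def in auto)
    finally show ?thesis using eta by (simp add: power_mult_distrib mult_left_mono)
  qed
  define u where "u = Q *v (x - y)"
  have b2: "avg n (\<lambda>t. (norm (a t - avg n a))\<^sup>2) \<le> (tau/6) * (norm (x - y))\<^sup>2"
  proof -
    have "avg n (\<lambda>t. (norm (a t - avg n a))\<^sup>2) = sig\<^sup>2 * avg n (\<lambda>t. (norm (P *v ((Gs t - G) *v u)))\<^sup>2)"
      unfolding dev u_def by (simp add: power_mult_distrib avg_cmul)
    also have "avg n (\<lambda>t. (norm (P *v ((Gs t - G) *v u)))\<^sup>2) \<le> avg n (\<lambda>t. (spec_norm P)\<^sup>2 * (norm ((Gs t - G) *v u))\<^sup>2)"
      by (rule avg_mono) (rule norm_mv_sq)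
    also have "\<dots> = (spec_norm P)\<^sup>2 * avg n (\<lambda>t. (norm (Gs t *v u - avg n (\<lambda>t. Gs t *v u)))\<^sup>2)"
      by (simp add: avg_cmul avgGs matrix_vector_mult_diff_rdistrib)
    also have "avg n (\<lambda>t. (norm (Gs t *v u - avg n (\<lambda>t. Gs t *v u)))\<^sup>2) \<le> avg n (\<lambda>t. (norm (Gs t *v u))\<^sup>2)"
      using avg_var[OF n1, of "\<lambda>t. Gs t *v u"] by simp
    also have "\<dots> \<le> L2 * (norm u)\<^sup>2" by (rule noise)
    also have "(norm u)\<^sup>2 \<le> (spec_norm Q)\<^sup>2 * (norm (x - y))\<^sup>2" unfolding u_def by (rule norm_mv_sq)
    finally have "avg n (\<lambda>t. (norm (a t - avg n a))\<^sup>2) \<le> sig\<^sup>2 * ((spec_norm P)\<^sup>2 * (L2 * ((spec_norm Q)\<^sup>2 * (norm (x - y))\<^sup>2)))"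
      using L2 by (simp add: mult_left_mono)
    also have "\<dots> = (sig\<^sup>2 * (spec_norm P * spec_norm Q)\<^sup>2 * L2) * (norm (x - y))\<^sup>2"
      by (simp add: power_mult_distrib algebra_simps)
    finally show ?thesis using kap tau_def by simp
  qed
  have b3: "(tau/6) * (norm (x - y))\<^sup>2 \<le> (tau/3) * (norm x)\<^sup>2 + (tau/3) * (norm y)\<^sup>2"
  proof -
    have "(tau/6) * (norm (x - y))\<^sup>2 \<le> (tau/6) * (2 * (norm x)\<^sup>2 + 2 * (norm y)\<^sup>2)"
      using tau tau_def by (intro mult_left_mono norm_diff_sq_le) auto
    then show ?thesis by (simp add: algebra_simps)
  qed
  have "avg n (\<lambda>t. (norm (a t))\<^sup>2) \<le> ((1+\<eta>)*(1 - tau)\<^sup>2 + tau/3) * (norm x)\<^sup>2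
           + (tau/3) * (norm y)\<^sup>2 + (1 + 1/\<eta>) * sig\<^sup>2 * (norm p)\<^sup>2"
    using var b1 b2 b3 by (simp add: algebra_simps)
  then show ?thesis unfolding a_def v_def x_def y_def p_def tau_def by simp
qed

lemma exp_bind_fin:
  fixes h :: "'b \<Rightarrow> real"
  assumes "finite (set_pmf p)" "\<And>x. x \<in> set_pmf p \<Longrightarrow> finite (set_pmf (q x))"
  shows "measure_pmf.expectation (bind_pmf p q) h = measure_pmf.expectation p (\<lambda>x. measure_pmf.expectation (q x) h)"
proof -
  have "measure_pmf.expectation (bind_pmf p q) h = (\<Sum>a\<in>set_pmf p. pmf p a *\<^sub>R measure_pmf.expectation (q a) h)"
    by (rule pmf_expectation_bind[OF assms(1) assms(2) order_refl])
  also have "\<dots> = measure_pmf.expectation p (\<lambda>x. measure_pmf.expectation (q x) h)"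
    by (rule integral_measure_pmf[symmetric]) (use assms in auto)
  finally show ?thesis .
qed

lemma exp_mono_fin:
  fixes f g :: "'b \<Rightarrow> real"
  assumes "finite (set_pmf p)" "\<And>x. f x \<le> g x"
  shows "measure_pmf.expectation p f \<le> measure_pmf.expectation p g"
  by (rule integral_mono) (use assms in \<open>auto intro: integrable_measure_pmf_finite\<close>)

lemma exp_lin_fin:
  fixes f g :: "'b \<Rightarrow> real"
  assumes "finite (set_pmf p)"
  shows "measure_pmf.expectation p (\<lambda>x. a * f x + b) = a * measure_pmf.expectation p f + b"
proof -
  have i: "integrable p f" "integrable p (\<lambda>x. a * f x)" using assms by (auto intro: integrable_measure_pmf_finite)
  have "measure_pmf.expectation p (\<lambda>x. a * f x + b) = measure_pmf.expectation p (\<lambda>x. a * f x) + measure_pmf.expectation p (\<lambda>x. b)"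
    by (rule Bochner_Integration.integral_add) (use i in auto)
  then show ?thesis by simp
qed

lemma exp_lin2_fin:
  fixes f g :: "'b \<Rightarrow> real"
  assumes "finite (set_pmf p)"
  shows "measure_pmf.expectation p (\<lambda>x. a * f x + b * g x) = a * measure_pmf.expectation p f + b * measure_pmf.expectation p g"
proof -
  have i: "integrable p (\<lambda>x. a * f x)" "integrable p (\<lambda>x. b * g x)" using assms by (auto intro: integrable_measure_pmf_finite)
  have "measure_pmf.expectation p (\<lambda>x. a * f x + b * g x) = measure_pmf.expectation p (\<lambda>x. a * f x) + measure_pmf.expectation p (\<lambda>x. b * g x)"
    by (rule Bochner_Integration.integral_add) (use i in auto)
  then show ?thesis by simp
qed

lemma fin_inner: "n \<ge> 1 \<Longrightarrow> finite (set_pmf (inner_dist Gs n s Gm gm zm j))"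
  by (induction j) (auto simp: set_pmf_of_set)

lemma exp_pmf_of_set_avg:
  assumes "n \<ge> 1"
  shows "measure_pmf.expectation (pmf_of_set {1..n}) (h::nat \<Rightarrow> real) = avg n h"
proof -
  have "measure_pmf.expectation (pmf_of_set {1..n}) h = sum h {1..n} / card {1..n}"
    by (rule integral_pmf_of_set) (use assms in auto)
  then show ?thesis unfolding avg_def by simp
qed

lemma exp_inner_step:
  fixes f :: "real^'k \<Rightarrow> real"
  assumes "n \<ge> 1"
  shows "measure_pmf.expectation (inner_dist Gs n s Gm gm zm (Suc j)) f =
         measure_pmf.expectation (inner_dist Gs n s Gm gm zm j)
           (\<lambda>w. avg n (\<lambda>t. f (w - s *\<^sub>R (Gs t *v w + (Gm - Gs t) *v zm - gm))))"
proof -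
  have "measure_pmf.expectation (inner_dist Gs n s Gm gm zm (Suc j)) f =
         measure_pmf.expectation (inner_dist Gs n s Gm gm zm j)
           (\<lambda>w. measure_pmf.expectation (map_pmf (\<lambda>t. w - s *\<^sub>R (Gs t *v w + (Gm - Gs t) *v zm - gm)) (pmf_of_set {1..n})) f)"
    unfolding inner_dist.simps
    by (rule exp_bind_fin) (use assms in \<open>auto simp: fin_inner set_pmf_of_set\<close>)
  also have "(\<lambda>w. measure_pmf.expectation (map_pmf (\<lambda>t. w - s *\<^sub>R (Gs t *v w + (Gm - Gs t) *v zm - gm)) (pmf_of_set {1..n})) f)
      = (\<lambda>w. avg n (\<lambda>t. f (w - s *\<^sub>R (Gs t *v w + (Gm - Gs t) *v zm - gm))))"
    by (rule ext, subst integral_map_pmf, rule exp_pmf_of_set_avg[OF assms])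
  finally show ?thesis .
qed

lemma inner_K:
  fixes f :: "real^'k \<Rightarrow> real"
  assumes n1: "n \<ge> 1"
    and step: "\<And>w. avg n (\<lambda>t. f (w - s *\<^sub>R (Gs t *v w + (Gm - Gs t) *v zm - gm))) \<le> \<rho> * f w + c"
    and rho: "0 \<le> \<rho>" "\<rho> < 1" and c: "c \<ge> 0"
  shows "measure_pmf.expectation (inner_dist Gs n s Gm gm zm j) f \<le> \<rho>^j * f zm + c / (1 - \<rho>)"
proof (induction j)
  case 0
  then show ?case using rho c by simp
next
  case (Suc j)
  have "measure_pmf.expectation (inner_dist Gs n s Gm gm zm (Suc j)) f
        \<le> measure_pmf.expectation (inner_dist Gs n s Gm gm zm j) (\<lambda>w. \<rho> * f w + c)"
    unfolding exp_inner_step[OF n1] by (rule exp_mono_fin[OF fin_inner[OF n1] step])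
  also have "\<dots> = \<rho> * measure_pmf.expectation (inner_dist Gs n s Gm gm zm j) f + c"
    by (rule exp_lin_fin[OF fin_inner[OF n1]])
  also have "\<dots> \<le> \<rho> * (\<rho>^j * f zm + c / (1 - \<rho>)) + c"
    using Suc rho by (simp add: mult_left_mono)
  also have "\<dots> = \<rho>^Suc j * f zm + c / (1 - \<rho>)"
    using rho by (simp add: field_simps)
  finally show ?case .
qed

lemma numeric_rho:
  fixes tau :: real and K :: nat
  assumes tau0: "tau > 0" and tau1: "tau \<le> 1/6" and K: "real K * tau = 2"
  defines "\<rho> \<equiv> (1 + 3*tau/4) * (1 - tau)\<^sup>2 + tau/3"
  shows "0 \<le> \<rho>" "1 - \<rho> \<ge> 11/12 * tau" "\<rho>^K \<le> 72/325"
proof -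
  show "0 \<le> \<rho>" unfolding \<rho>_def using tau0 by (intro add_nonneg_nonneg mult_nonneg_nonneg) auto
  have R: "1 - \<rho> = tau * (11/12 + tau/2 - 3*tau\<^sup>2/4)"
    unfolding \<rho>_def by (simp add: power2_eq_square field_simps)
  have "tau/2 - 3*tau\<^sup>2/4 \<ge> 0"
  proof -
    have "3*tau\<^sup>2/4 = tau * (3*tau/4)" by (simp add: power2_eq_square)
    also have "\<dots> \<le> tau * (1/2)" using tau0 tau1 by (intro mult_left_mono) auto
    finally show ?thesis by simp
  qed
  then show Rb: "1 - \<rho> \<ge> 11/12 * tau" unfolding R using tau0
    by (simp add: algebra_simps mult_left_mono)
  have r0: "0 \<le> \<rho>" unfolding \<rho>_def using tau0 by (intro add_nonneg_nonneg mult_nonneg_nonneg) auto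
  have "\<rho> \<le> exp (-(1 - \<rho>))" using exp_ge_add_one_self[of "-(1-\<rho>)"] by simp
  then have "\<rho>^K \<le> exp (-(1 - \<rho>))^K" using r0 by (simp add: power_mono)
  also have "\<dots> = exp (- (real K * (1 - \<rho>)))" by (simp add: exp_of_nat_mult[symmetric] algebra_simps)
  also have "\<dots> \<le> 72/325"
  proof -
    have "real K * (1 - \<rho>) \<ge> real K * (11/12 * tau)" using Rb by (intro mult_left_mono) auto
    also have "real K * (11/12 * tau) = 11/6" using K by (simp add: algebra_simps)
    finally have KR: "real K * (1 - \<rho>) \<ge> 11/6" .
    have "(325::real)/72 = 1 + 11/6 + (11/6)\<^sup>2/2" by (simp add: power2_eq_square)
    also have "\<dots> \<le> exp (11/6)" by (rule exp_lower_Taylor_quadratic) simp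
    also have "\<dots> \<le> exp (real K * (1 - \<rho>))" using KR by simp
    finally have "325/72 \<le> exp (real K * (1 - \<rho>))" .
    then have "inverse (exp (real K * (1 - \<rho>))) \<le> inverse (325/72)"
      by (intro le_imp_inverse_le) auto
    then show ?thesis by (simp add: exp_minus)
  qed
  finally show "\<rho>^K \<le> 72/325" .
qed

lemma inner_final:
  fixes Gs :: "nat \<Rightarrow> real^'k^'k" and Gm :: "real^'k^'k" and gm zm :: "real^'k"
  assumes n1: "n \<ge> 1"
   and Gdef: "G = avg n Gs"
   and zs: "G *v zs = g"
   and QP: "Q ** P = mat 1"
   and PG: "P ** G = L ** P"
   and diag: "diagonal_mat L"
   and lo: "\<And>i. lam \<le> L$i$i" and hi: "\<And>i. sig * L$i$i \<le> 1"
   and noise: "\<And>u. avg n (\<lambda>t. (norm (Gs t *v u))\<^sup>2) \<le> L2 * (norm u)\<^sup>2"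
   and L2: "L2 \<ge> 0"
   and kap: "sig\<^sup>2 * (spec_norm P * spec_norm Q)\<^sup>2 * L2 = sig * lam / 6"
   and sig0: "sig > 0" and lam0: "lam > 0" and tau1: "sig * lam \<le> 1/6"
   and K: "real K = 2 / (sig * lam)"
  defines "e \<equiv> (G *v zm - g) - (Gm *v zm - gm)"
  shows "measure_pmf.expectation (inner_dist Gs n sig Gm gm zm K) (\<lambda>z. (norm (P *v (z - zs)))\<^sup>2)
         \<le> 2/3 * (norm (P *v (zm - zs)))\<^sup>2 + 2 * (1 - sig * lam) / lam\<^sup>2 * (norm (P *v e))\<^sup>2"
proof -
  define tau where "tau = sig * lam"
  have tau0: "tau > 0" using sig0 lam0 tau_def by simp
  define \<eta> where "\<eta> = 3 * tau / 4"
  have eta0: "\<eta> > 0" using tau0 \<eta>_def by simp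
  define \<rho> where "\<rho> = (1 + 3*tau/4) * (1 - tau)\<^sup>2 + tau/3"
  define Y where "Y = (norm (P *v (zm - zs)))\<^sup>2"
  define E2 where "E2 = (norm (P *v e))\<^sup>2"
  define c where "c = (tau/3) * Y + (1 + 1/\<eta>) * sig\<^sup>2 * E2"
  have Kt: "real K * tau = 2" using K sig0 lam0 tau_def by simp
  note num = numeric_rho[OF tau0 _ Kt, folded \<rho>_def]
  have r0: "0 \<le> \<rho>" and Rb: "1 - \<rho> \<ge> 11/12 * tau" and rK: "\<rho>^K \<le> 72/325"
    using num tau1 tau_def by auto
  have r1: "\<rho> < 1" using Rb tau0 by simp
  have c0: "c \<ge> 0" unfolding c_def Y_def E2_def using tau0 eta0 by simp
  have step: "avg n (\<lambda>t. (\<lambda>z. (norm (P *v (z - zs)))\<^sup>2) (w - sig *\<^sub>R (Gs t *v w + (Gm - Gs t) *v zm - gm)))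
      \<le> \<rho> * (\<lambda>z. (norm (P *v (z - zs)))\<^sup>2) w + c" for w
  proof -
    have "avg n (\<lambda>t. (norm (P *v (w - sig *\<^sub>R (Gs t *v w + (Gm - Gs t) *v zm - gm) - zs)))\<^sup>2)
         \<le> ((1+\<eta>)*(1 - sig*lam)\<^sup>2 + sig*lam/3) * (norm (P *v (w - zs)))\<^sup>2
           + (sig*lam/3) * (norm (P *v (zm - zs)))\<^sup>2 + (1 + 1/\<eta>) * sig\<^sup>2 * (norm (P *v e))\<^sup>2"
      unfolding e_def
      by (rule step_bound[OF n1 Gdef zs QP PG diag _ hi noise L2 kap _ eta0])
         (use lo sig0 lam0 in \<open>auto intro: mult_left_mono\<close>)
    then show ?thesis unfolding \<rho>_def c_def Y_def E2_def \<eta>_def tau_def by (simp add: algebra_simps)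
  qed
  have "measure_pmf.expectation (inner_dist Gs n sig Gm gm zm K) (\<lambda>z. (norm (P *v (z - zs)))\<^sup>2)
        \<le> \<rho>^K * Y + c / (1 - \<rho>)"
    unfolding Y_def by (rule inner_K[OF n1 step r0 r1 c0])
  also have "\<rho>^K * Y \<le> 72/325 * Y" using rK unfolding Y_def by (intro mult_right_mono) auto
  also have "c / (1 - \<rho>) \<le> c / (11/12 * tau)"
    using c0 Rb tau0 by (intro divide_left_mono) auto
  also have "c / (11/12 * tau) = 4/11 * Y + (12 / (11 * tau)) * (1 + 1/\<eta>) * sig\<^sup>2 * E2"
    unfolding c_def using tau0 by (simp add: field_simps)
  also have "(12 / (11 * tau)) * (1 + 1/\<eta>) * sig\<^sup>2 = 4 * (3 * tau + 4) / (11 * lam\<^sup>2)"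
  proof -
    have s: "sig = tau / lam" using tau_def lam0 by simp
    show ?thesis unfolding s \<eta>_def using tau0 lam0 by (simp add: field_simps power2_eq_square)
  qed
  also have "4 * (3 * tau + 4) / (11 * lam\<^sup>2) \<le> 2 * (1 - tau) / lam\<^sup>2"
  proof -
    have "4 * (3 * tau + 4) / 11 \<le> 2 * (1 - tau)" using tau1 unfolding tau_def by (simp add: mult.commute)
    then have "(4 * (3 * tau + 4) / 11) / lam\<^sup>2 \<le> (2 * (1 - tau)) / lam\<^sup>2"
      using lam0 by (intro divide_right_mono) auto
    then show ?thesis by simp
  qed
  finally have "measure_pmf.expectation (inner_dist Gs n sig Gm gm zm K) (\<lambda>z. (norm (P *v (z - zs)))\<^sup>2)
      \<le> 72/325 * Y + (4/11 * Y + 2 * (1 - tau) / lam\<^sup>2 * E2)"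
    using E2_def by (simp add: mult_right_mono)
  also have "\<dots> \<le> 2/3 * Y + 2 * (1 - tau) / lam\<^sup>2 * E2" using Y_def by simp
  finally show ?thesis unfolding Y_def E2_def tau_def .
qed

lemma mat1_ne0: "(mat 1 :: real^'n^'n) \<noteq> 0"
proof
  assume "(mat 1 :: real^'n^'n) = 0"
  then have "(mat 1 :: real^'n^'n) $ undefined $ undefined = 0" by simp
  then show False by (simp add: mat_def)
qed

lemma not_invertible_0: "\<not> invertible (0 :: real^'n^'n)"
  unfolding invertible_def using mat1_ne0 by (metis times0_left)

lemma n_pos:
  assumes "invertible (avg n (f :: nat \<Rightarrow> real^'d^'d))"
  shows "n \<ge> 1"
proof (rule ccontr)
  assume "\<not> n \<ge> 1"
  then have "n = 0" by simp
  then have "avg n f = 0" unfolding avg_def by simp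
  then show False using assms not_invertible_0 by metis
qed

lemma transpose_inner: "(M *v u) \<bullet> w = u \<bullet> (transpose M *v (w::real^'m))"
proof -
  have "u \<bullet> (transpose M *v w) = u \<bullet> (w v* M)" by simp
  also have "\<dots> = (w v* M) \<bullet> u" by (simp add: inner_commute)
  also have "\<dots> = w \<bullet> (M *v u)" by (simp add: dot_lmul_matrix)
  finally show ?thesis by (simp add: inner_commute)
qed

lemma pd_invertible:
  fixes C :: "real^'n^'n"
  assumes "\<forall>v. v \<noteq> 0 \<longrightarrow> v \<bullet> (C *v v) > 0"
  shows "invertible C"
proof -
  have "\<forall>x. C *v x = 0 \<longrightarrow> x = 0" using assms by force
  then have "\<exists>B. B ** C = mat 1" using matrix_left_invertible_ker by blast
  then show ?thesis using invertible_left_inverse by blast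
qed

lemma inv_sym:
  fixes C :: "real^'n^'n"
  assumes "invertible C" "transpose C = C"
  shows "transpose (matrix_inv C) = matrix_inv C"
proof -
  define Ci where "Ci = matrix_inv C"
  have 1: "C ** Ci = mat 1" "Ci ** C = mat 1" using minv[OF assms(1)] Ci_def by auto
  have "transpose (C ** Ci) = mat 1" using 1 by simp
  then have 2: "transpose Ci ** C = mat 1" using assms(2) by (simp add: matrix_transpose_mul)
  have "transpose Ci = transpose Ci ** (C ** Ci)" using 1 by simp
  also have "\<dots> = Ci" using 2 by (simp add: matrix_mul_assoc)
  finally show ?thesis using Ci_def by simp
qed

lemma beta_pos:
  fixes A C :: "real^'d^'d"
  assumes A: "invertible A" and C: "pos_def C"
  shows "8 * lam_max (transpose A ** matrix_inv C ** A) / lam_min C > 0"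
proof -
  have Cs: "transpose C = C" and Cp: "\<forall>v. v \<noteq> 0 \<longrightarrow> v \<bullet> (C *v v) > 0" using C unfolding pos_def_def by auto
  have Ci: "invertible C" by (rule pd_invertible[OF Cp])
  define Cinv where "Cinv = matrix_inv C"
  have CCi: "C ** Cinv = mat 1" using minv[OF Ci] Cinv_def by auto
  have Cis: "transpose Cinv = Cinv" using inv_sym[OF Ci Cs] Cinv_def by simp
  define M where "M = transpose A ** Cinv ** A"
  have Ms: "transpose M = M" unfolding M_def using Cis by (simp add: matrix_transpose_mul matrix_mul_assoc)
  have Mp: "\<forall>v. v \<noteq> 0 \<longrightarrow> v \<bullet> (M *v v) > 0"
  proof (intro allI impI)
    fix v :: "real^'d" assume v: "v \<noteq> 0"
    define u where "u = A *v v"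
    have u0: "u \<noteq> 0" using inj_matrix_vector_mult[OF A] v unfolding u_def
      by (metis injD matrix_vector_mult_0_right)
    define w where "w = Cinv *v u"
    have uw: "u = C *v w" unfolding w_def by (simp add: matrix_vector_mul_assoc CCi)
    have w0: "w \<noteq> 0" using u0 uw by auto
    have "v \<bullet> (M *v v) = v \<bullet> (transpose A *v w)"
      unfolding M_def w_def u_def by (simp add: matrix_vector_mul_assoc matrix_mul_assoc)
    also have "\<dots> = u \<bullet> w" unfolding u_def by (simp add: transpose_inner)
    also have "\<dots> = w \<bullet> (C *v w)" unfolding uw by (simp add: inner_commute)
    finally show "v \<bullet> (M *v v) > 0" using Cp w0 by simp
  qed
  have "lam_max M > 0" using sym_pd_lam[OF Ms Mp] by simp
  moreover have "lam_min C > 0" using sym_pd_lam[OF Cs Cp] by simp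
  ultimately show ?thesis unfolding M_def Cinv_def by simp
qed

lemma bmat_eig_pos:
  fixes A C :: "real^'d^'d"
  assumes b: "\<beta> > 0" and A: "invertible A" and Cp: "\<forall>v. v \<noteq> 0 \<longrightarrow> v \<bullet> (C *v v) > 0"
    and z: "z \<noteq> 0" and ev: "bmat \<beta> A C *v z = l *\<^sub>R z"
  shows "l > 0"
proof -
  define x where "x = zl z"
  define y where "y = zr z"
  have zxy: "z = bvec x y" unfolding x_def y_def by (rule bvec_split)
  have Gz: "bmat \<beta> A C *v z = bvec (- (sqrt \<beta> *\<^sub>R (transpose A *v y))) (sqrt \<beta> *\<^sub>R (A *v x) + \<beta> *\<^sub>R (C *v y))"
    unfolding zxy by (rule bmat_mv)
  have "l *\<^sub>R z = bvec (l *\<^sub>R x) (l *\<^sub>R y)" unfolding zxy by (simp add: bvec_scale)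
  then have comp: "- (sqrt \<beta> *\<^sub>R (transpose A *v y)) = l *\<^sub>R x" "sqrt \<beta> *\<^sub>R (A *v x) + \<beta> *\<^sub>R (C *v y) = l *\<^sub>R y"
    using ev Gz bvec_eq_iff by metis+
  have y0: "y \<noteq> 0"
  proof
    assume y0: "y = 0"
    then have "sqrt \<beta> *\<^sub>R (A *v x) = 0" using comp(2) by simp
    then have "A *v x = 0" using b by simp
    then have "x = 0" using inj_matrix_vector_mult[OF A] by (metis injD matrix_vector_mult_0_right)
    then show False using z zxy y0 by simp
  qed
  have "z \<bullet> (bmat \<beta> A C *v z) = x \<bullet> (- (sqrt \<beta> *\<^sub>R (transpose A *v y))) + y \<bullet> (sqrt \<beta> *\<^sub>R (A *v x) + \<beta> *\<^sub>R (C *v y))"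
    unfolding Gz by (subst zxy) (simp add: bvec_inner)
  also have "\<dots> = \<beta> * (y \<bullet> (C *v y))"
    using transpose_inner[of A x y] by (simp add: inner_add_right inner_commute)
  finally have "l * (z \<bullet> z) = \<beta> * (y \<bullet> (C *v y))" using ev by simp
  moreover have "\<beta> * (y \<bullet> (C *v y)) > 0" using b Cp y0 by simp
  ultimately have "l * (z \<bullet> z) > 0" by simp
  moreover have "z \<bullet> z > 0" using z by simp
  ultimately show ?thesis by (simp add: zero_less_mult_iff)
qed

lemma diag_axis: "diagonal_mat L \<Longrightarrow> L *v axis i 1 = L$i$i *\<^sub>R axis i (1::real)"
  by (simp add: vec_eq_iff diag_mv axis_def)

lemma diag_eigs:
  fixes Q P L :: "real^'k^'k"
  assumes QP: "Q ** P = mat 1" and PQ: "P ** Q = mat 1" and GQ: "G = Q ** L ** P" and diag: "diagonal_mat L"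
  shows "real_eigenvalues G = range (\<lambda>i. L$i$i)"
proof
  show "range (\<lambda>i. L$i$i) \<subseteq> real_eigenvalues G"
  proof clarify
    fix i
    define v where "v = Q *v axis i 1"
    have "P *v v = axis i 1" unfolding v_def by (simp add: matrix_vector_mul_assoc PQ)
    then have v0: "v \<noteq> 0" by (auto simp: axis_eq_0_iff)
    have "G *v v = Q *v (L *v (P *v v))" unfolding GQ by (simp add: matrix_vector_mul_assoc matrix_mul_assoc)
    also have "\<dots> = L$i$i *\<^sub>R v"
      using \<open>P *v v = axis i 1\<close> unfolding v_def by (simp add: diag_axis[OF diag] matrix_vector_mult_scaleR)
    finally show "L$i$i \<in> real_eigenvalues G" unfolding real_eigenvalues_def using v0 by blast
  qed
next
  show "real_eigenvalues G \<subseteq> range (\<lambda>i. L$i$i)"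
  proof
    fix l assume "l \<in> real_eigenvalues G"
    then obtain v where v0: "v \<noteq> 0" and ev: "G *v v = l *\<^sub>R v" unfolding real_eigenvalues_def by auto
    define w where "w = P *v v"
    have "Q *v w = v" unfolding w_def by (simp add: matrix_vector_mul_assoc QP)
    then have w0: "w \<noteq> 0" using v0 by auto
    have "L *v w = P *v (G *v v)"
      unfolding w_def GQ by (simp add: matrix_vector_mul_assoc matrix_mul_assoc PQ)
    also have "\<dots> = l *\<^sub>R w" unfolding ev w_def by (simp add: matrix_vector_mult_scaleR)
    finally have Lw: "L *v w = l *\<^sub>R w" .
    obtain k where k: "w$k \<noteq> 0" using w0 by (auto simp: vec_eq_iff)
    have "L$k$k * w$k = l * w$k" using arg_cong[OF Lw, of "\<lambda>x. x$k"] diag_mv[OF diag] by simp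
    then have "l = L$k$k" using k by simp
    then show "l \<in> range (\<lambda>i. L$i$i)" by simp
  qed
qed

lemma noise_bound:
  fixes Gs :: "nat \<Rightarrow> real^'k^'k"
  shows "avg n (\<lambda>t. (norm (Gs t *v u))\<^sup>2) \<le> spec_norm (avg n (\<lambda>t. transpose (Gs t) ** Gs t)) * (norm u)\<^sup>2"
proof -
  define H where "H = avg n (\<lambda>t. transpose (Gs t) ** Gs t)"
  have "(norm (Gs t *v u))\<^sup>2 = ((transpose (Gs t) ** Gs t) *v u) \<bullet> u" for t
  proof -
    have "(norm (Gs t *v u))\<^sup>2 = (Gs t *v u) \<bullet> (Gs t *v u)" by (simp add: power2_norm_eq_inner)
    also have "\<dots> = u \<bullet> (transpose (Gs t) *v (Gs t *v u))" by (rule transpose_inner)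
    finally show ?thesis by (simp add: matrix_vector_mul_assoc inner_commute)
  qed
  then have "avg n (\<lambda>t. (norm (Gs t *v u))\<^sup>2) = (H *v u) \<bullet> u"
    unfolding H_def by (simp add: avg_inner_left avg_mv)
  also have "\<dots> \<le> norm (H *v u) * norm u" by (rule norm_cauchy_schwarz)
  also have "\<dots> \<le> spec_norm H * norm u * norm u" by (simp add: mult_right_mono spec_norm_le)
  finally show ?thesis unfolding H_def by (simp add: power2_eq_square mult.assoc)
qed

lemma eig_le_L2:
  fixes Gs :: "nat \<Rightarrow> real^'k^'k"
  assumes n1: "n \<ge> 1" and ev: "avg n Gs *v v = l *\<^sub>R v" and v0: "v \<noteq> 0"
    and noise: "\<And>u. avg n (\<lambda>t. (norm (Gs t *v u))\<^sup>2) \<le> L2 * (norm u)\<^sup>2"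
  shows "l\<^sup>2 \<le> L2"
proof -
  have "(norm (avg n (\<lambda>t. Gs t *v v)))\<^sup>2 \<le> avg n (\<lambda>t. (norm (Gs t *v v))\<^sup>2)"
  proof -
    have "avg n (\<lambda>t. (norm (Gs t *v v - avg n (\<lambda>t. Gs t *v v)))\<^sup>2) \<ge> 0"
      unfolding avg_def by (simp add: sum_nonneg)
    then show ?thesis using avg_var[OF n1, of "\<lambda>t. Gs t *v v"] by simp
  qed
  also have "\<dots> \<le> L2 * (norm v)\<^sup>2" by (rule noise)
  also have "avg n (\<lambda>t. Gs t *v v) = l *\<^sub>R v" using ev by (simp add: avg_mv)
  finally have "l\<^sup>2 * (norm v)\<^sup>2 \<le> L2 * (norm v)\<^sup>2" by (simp add: power_mult_distrib)
  then show ?thesis using v0 by simp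
qed

lemma kappa_ge1:
  fixes Q P :: "real^'k^'k"
  assumes "Q ** P = mat 1"
  shows "spec_norm Q * spec_norm P \<ge> 1"
proof -
  define u where "u = axis (undefined::'k) (1::real)"
  have nu: "norm u = 1" unfolding u_def by simp
  have "1 = norm (Q *v (P *v u))" using nu by (simp add: matrix_vector_mul_assoc assms)
  also have "\<dots> \<le> spec_norm Q * norm (P *v u)" by (rule spec_norm_le)
  also have "\<dots> \<le> spec_norm Q * (spec_norm P * norm u)"
    by (intro mult_left_mono spec_norm_le spec_norm_nonneg)
  finally show ?thesis using nu by simp
qed

lemma fin_batch: "b \<le> n \<Longrightarrow> finite (set_pmf (batch_pmf n b))"
proof -
  assume b: "b \<le> n"
  define X where "X = {S. S \<subseteq> {1..n} \<and> card S = b}"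
  have fX: "finite X" unfolding X_def by (rule finite_subset[of _ "Pow {1..n}"]) auto
  have "{1..b} \<in> X" unfolding X_def using b by auto
  then have "X \<noteq> {}" by auto
  then show ?thesis unfolding batch_pmf_def X_def[symmetric] using fX by (simp add: set_pmf_of_set)
qed

lemma fin_epoch:
  assumes "n \<ge> 1" "\<forall>k. B k \<le> n"
  shows "finite (set_pmf (epoch_dist Gs gs n s K B z0 m))"
  by (induction m) (use assms fin_batch fin_inner in auto)

theorem theorem1:
  fixes \<phi> :: "'s \<Rightarrow> real^'d" and s :: "nat \<Rightarrow> 's" and r :: "nat \<Rightarrow> real"
    and \<gamma> :: real and n :: nat
    and Q \<Lambda> :: "real^('d+'d)^('d+'d)"
    and B :: "nat \<Rightarrow> nat" and z0 :: "real^('d+'d)" and K m :: nat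
  defines "\<sigma> \<equiv> sigma_theta \<phi> s \<gamma> n Q"
    and "lmin \<equiv> lminG \<phi> s \<gamma> n"
    and "Gs \<equiv> Gt \<phi> s \<gamma> n"
    and "gs \<equiv> gt \<phi> s r \<gamma> n"
    and "zs \<equiv> zstar \<phi> s r \<gamma> n"
  assumes "invertible (Ahat \<phi> s \<gamma> n)" and "pos_def (Chat \<phi> s n)"
    and "invertible Q" and "diagonal_mat \<Lambda>" and "Gbar \<phi> s \<gamma> n = Q ** \<Lambda> ** matrix_inv Q"
    and "real K = 2 / (\<sigma> * lmin)"
    and "\<forall>k. 1 \<le> B k \<and> B k \<le> n"
  shows "measure_pmf.expectation (epoch_dist Gs gs n \<sigma> K B z0 (Suc m))
           (\<lambda>z. (norm (matrix_inv Q *v (z - zs)))\<^sup>2)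
         \<le> 2/3 * measure_pmf.expectation (epoch_dist Gs gs n \<sigma> K B z0 m)
           (\<lambda>z. (norm (matrix_inv Q *v (z - zs)))\<^sup>2)
           + 2 * (1 - \<sigma> * lmin) / lmin\<^sup>2 *
             measure_pmf.expectation (err_dist Gs gs n \<sigma> K B z0 m)
               (\<lambda>e. (norm (matrix_inv Q *v e))\<^sup>2)"
proof -
  have sd: "\<sigma> = sigma_theta \<phi> s \<gamma> n Q" and ld: "lmin = lminG \<phi> s \<gamma> n"
    and Gsd: "Gs = Gt \<phi> s \<gamma> n" and gsd: "gs = gt \<phi> s r \<gamma> n" and zsd: "zs = zstar \<phi> s r \<gamma> n"
    using assms(1-5) by simp_all
  note Ainv = assms(6) and Cpd = assms(7) and Qinv = assms(8) and diag = assms(9)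
    and Gdiag0 = assms(10) and Kd = assms(11) and Bd = assms(12)
  define A where "A = Ahat \<phi> s \<gamma> n"
  define C where "C = Chat \<phi> s n"
  define \<beta> where "\<beta> = beta \<phi> s \<gamma> n"
  define P where "P = matrix_inv Q"
  define L2 where "L2 = LG2 \<phi> s \<gamma> n"
  define G where "G = avg n Gs"
  define g where "g = avg n gs"
  have n1: "n \<ge> 1" using n_pos Ainv unfolding Ahat_def by blast
  have Cs: "transpose C = C" and Cp: "\<forall>v. v \<noteq> 0 \<longrightarrow> v \<bullet> (C *v v) > 0"
    using Cpd unfolding pos_def_def C_def by auto
  have bpos: "\<beta> > 0" unfolding \<beta>_def beta_def using beta_pos[OF Ainv Cpd] .
  have GB: "G = bmat \<beta> A C"
    unfolding G_def Gsd Gt_def A_def C_def Ahat_def Chat_def \<beta>_def by (rule avg_bmat)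
  have gB: "g = bvec 0 (sqrt \<beta> *\<^sub>R bhat \<phi> s r n)"
    unfolding g_def gsd gt_def \<beta>_def bhat_def by (simp add: avg_bvec avg_zero avg_scaleR)
  have Gzs: "G *v zs = g"
  proof -
    have "A *v (matrix_inv A *v bhat \<phi> s r n) = bhat \<phi> s r n"
      using minv[OF Ainv] unfolding A_def by (simp add: matrix_vector_mul_assoc)
    then show ?thesis unfolding GB gB zsd zstar_def A_def[symmetric] by (simp add: bmat_mv)
  qed
  have QP: "Q ** P = mat 1" and PQ: "P ** Q = mat 1" using minv[OF Qinv] P_def by auto
  have Gdiag: "G = Q ** \<Lambda> ** P" using Gdiag0 unfolding G_def Gsd Gbar_def P_def .
  have PG: "P ** G = \<Lambda> ** P" unfolding Gdiag by (simp add: matrix_mul_assoc PQ)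
  have eigs: "real_eigenvalues G = range (\<lambda>i. \<Lambda>$i$i)" by (rule diag_eigs[OF QP PQ Gdiag diag])
  have lmd: "lmin = Min (range (\<lambda>i. \<Lambda>$i$i))"
    unfolding ld lminG_def lam_min_def eigs[symmetric] G_def Gsd Gbar_def ..
  have allpos: "\<Lambda>$i$i > 0" for i
  proof -
    have "\<Lambda>$i$i \<in> real_eigenvalues G" unfolding eigs by simp
    then obtain v where "v \<noteq> 0" "G *v v = \<Lambda>$i$i *\<^sub>R v" unfolding real_eigenvalues_def by auto
    then show ?thesis using bmat_eig_pos[OF bpos Ainv[folded A_def] Cp] GB by blast
  qed
  have lo: "lmin \<le> \<Lambda>$i$i" for i unfolding lmd by (rule Min_le) auto
  have "lmin \<in> range (\<lambda>i. \<Lambda>$i$i)" unfolding lmd by (rule Min_in) auto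
  then obtain i0 where i0: "lmin = \<Lambda>$i0$i0" by auto
  have lpos: "lmin > 0" using allpos i0 by simp
  have noise: "avg n (\<lambda>t. (norm (Gs t *v u))\<^sup>2) \<le> L2 * (norm u)\<^sup>2" for u
    unfolding L2_def LG2_def Gsd by (rule noise_bound)
  have L2nn: "L2 \<ge> 0" unfolding L2_def LG2_def by (rule spec_norm_nonneg)
  have eigL2: "(\<Lambda>$i$i)\<^sup>2 \<le> L2" for i
  proof -
    have "\<Lambda>$i$i \<in> real_eigenvalues G" unfolding eigs by simp
    then obtain v where "v \<noteq> 0" "G *v v = \<Lambda>$i$i *\<^sub>R v" unfolding real_eigenvalues_def by auto
    then show ?thesis using eig_le_L2[OF n1 _ _ noise] G_def by blast
  qed
  have l2L2: "lmin\<^sup>2 \<le> L2" using eigL2 i0 by simp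
  have L2pos: "L2 > 0" using l2L2 lpos by (smt (verit) zero_less_power)
  define \<kappa> where "\<kappa> = spec_norm Q * spec_norm P"
  have k1: "\<kappa> \<ge> 1" unfolding \<kappa>_def by (rule kappa_ge1[OF QP])
  have sdef: "\<sigma> = lmin / (6 * \<kappa>\<^sup>2 * L2)"
    unfolding sd sigma_theta_def ld[symmetric] kappa_def \<kappa>_def P_def L2_def ..
  have k2: "\<kappa>\<^sup>2 \<ge> 1" using k1 by (simp add: one_le_power)
  have den: "6 * \<kappa>\<^sup>2 * L2 > 0" using k2 L2pos by (intro mult_pos_pos) auto
  have spos: "\<sigma> > 0" unfolding sdef using lpos den by simp
  have L2k: "L2 \<le> \<kappa>\<^sup>2 * L2" using k2 L2pos by simp
  have tau1: "\<sigma> * lmin \<le> 1/6"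
  proof -
    have "\<sigma> * lmin = lmin\<^sup>2 / (6 * \<kappa>\<^sup>2 * L2)" unfolding sdef by (simp add: power2_eq_square)
    also have "\<dots> \<le> 1/6"
    proof -
      have a: "lmin\<^sup>2 \<le> \<kappa>\<^sup>2 * L2" using l2L2 L2k by linarith
      have b: "\<kappa>\<^sup>2 * L2 > 0" using k2 L2pos by (intro mult_pos_pos) auto
      show ?thesis using a b by (simp add: field_simps)
    qed
    finally show ?thesis .
  qed
  have hi: "\<sigma> * \<Lambda>$i$i \<le> 1" for i
  proof -
    have "lmin * \<Lambda>$i$i \<le> \<Lambda>$i$i * \<Lambda>$i$i" using lo[of i] allpos[of i] by (simp add: mult_right_mono)
    also have "\<dots> \<le> L2" using eigL2[of i] by (simp add: power2_eq_square)
    finally have a0: "lmin * \<Lambda>$i$i \<le> L2" .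
    have e6: "6 * \<kappa>\<^sup>2 * L2 = 6 * (\<kappa>\<^sup>2 * L2)" by simp
    have a: "lmin * \<Lambda>$i$i \<le> 6 * \<kappa>\<^sup>2 * L2" unfolding e6 using a0 L2k L2pos by linarith
    have "\<sigma> * \<Lambda>$i$i = (lmin * \<Lambda>$i$i) / (6 * \<kappa>\<^sup>2 * L2)" unfolding sdef by simp
    also have "\<dots> \<le> 1" using a den by simp
    finally show ?thesis .
  qed
  have kapE: "\<sigma>\<^sup>2 * (spec_norm P * spec_norm Q)\<^sup>2 * L2 = \<sigma> * lmin / 6"
  proof -
    have "(spec_norm P * spec_norm Q) = \<kappa>" unfolding \<kappa>_def by simp
    moreover have "\<sigma> * \<kappa>\<^sup>2 * L2 = lmin / 6" unfolding sdef using k1 L2pos by (simp add: field_simps)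
    ultimately show ?thesis by (simp add: power2_eq_square algebra_simps)
  qed
  define f where "f z = (norm (P *v (z - zs)))\<^sup>2" for z
  define cc where "cc = 2 * (1 - \<sigma> * lmin) / lmin\<^sup>2"
  define h where "h z S = (norm (P *v ((G *v z - g) - (bavg S Gs *v z - bavg S gs))))\<^sup>2" for z S
  have inner: "measure_pmf.expectation (inner_dist Gs n \<sigma> (bavg S Gs) (bavg S gs) z K) f \<le> 2/3 * f z + cc * h z S" for z S
    unfolding f_def cc_def h_def
    by (rule inner_final[OF n1 G_def Gzs QP PG diag lo hi noise L2nn kapE spos lpos tau1 Kd])
  have fB: "finite (set_pmf (batch_pmf n (B k)))" for k using Bd fin_batch by blast
  have fE: "finite (set_pmf (epoch_dist Gs gs n \<sigma> K B z0 m))" using fin_epoch[OF n1] Bd by blast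
  have fI: "finite (set_pmf (inner_dist Gs n \<sigma> Gm gm z K))" for Gm gm z using fin_inner[OF n1] .
  have "measure_pmf.expectation (epoch_dist Gs gs n \<sigma> K B z0 (Suc m)) f
      = measure_pmf.expectation (epoch_dist Gs gs n \<sigma> K B z0 m) (\<lambda>z. measure_pmf.expectation
          (bind_pmf (batch_pmf n (B m)) (\<lambda>S. inner_dist Gs n \<sigma> (bavg S Gs) (bavg S gs) z K)) f)"
    unfolding epoch_dist.simps
    by (rule exp_bind_fin[OF fE]) (auto simp: fB fI)
  also have "\<dots> = measure_pmf.expectation (epoch_dist Gs gs n \<sigma> K B z0 m) (\<lambda>z. measure_pmf.expectation
          (batch_pmf n (B m)) (\<lambda>S. measure_pmf.expectation (inner_dist Gs n \<sigma> (bavg S Gs) (bavg S gs) z K) f))"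
    by (rule arg_cong[where f="measure_pmf.expectation _"], rule ext, rule exp_bind_fin[OF fB fI])
  also have "\<dots> \<le> measure_pmf.expectation (epoch_dist Gs gs n \<sigma> K B z0 m) (\<lambda>z. measure_pmf.expectation
          (batch_pmf n (B m)) (\<lambda>S. cc * h z S + 2/3 * f z))"
    by (intro exp_mono_fin[OF fE] exp_mono_fin[OF fB]) (use inner in \<open>simp add: add.commute\<close>)
  also have "\<dots> = measure_pmf.expectation (epoch_dist Gs gs n \<sigma> K B z0 m) (\<lambda>z. 2/3 * f z + cc *
          measure_pmf.expectation (batch_pmf n (B m)) (h z))"
    by (simp add: exp_lin_fin[OF fB] add.commute)
  also have "\<dots> = 2/3 * measure_pmf.expectation (epoch_dist Gs gs n \<sigma> K B z0 m) f + cc *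
          measure_pmf.expectation (epoch_dist Gs gs n \<sigma> K B z0 m) (\<lambda>z. measure_pmf.expectation (batch_pmf n (B m)) (h z))"
    by (rule exp_lin2_fin[OF fE])
  also have "measure_pmf.expectation (epoch_dist Gs gs n \<sigma> K B z0 m) (\<lambda>z. measure_pmf.expectation (batch_pmf n (B m)) (h z))
      = measure_pmf.expectation (err_dist Gs gs n \<sigma> K B z0 m) (\<lambda>e. (norm (P *v e))\<^sup>2)"
  proof -
    have "measure_pmf.expectation (err_dist Gs gs n \<sigma> K B z0 m) (\<lambda>e. (norm (P *v e))\<^sup>2)
      = measure_pmf.expectation (epoch_dist Gs gs n \<sigma> K B z0 m) (\<lambda>z. measure_pmf.expectation
          (map_pmf (\<lambda>S. (avg n Gs *v z - avg n gs) - (bavg S Gs *v z - bavg S gs)) (batch_pmf n (B m))) (\<lambda>e. (norm (P *v e))\<^sup>2))"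
      unfolding err_dist_def by (rule exp_bind_fin[OF fE]) (simp add: fB)
    also have "\<dots> = measure_pmf.expectation (epoch_dist Gs gs n \<sigma> K B z0 m) (\<lambda>z. measure_pmf.expectation (batch_pmf n (B m)) (h z))"
      unfolding h_def G_def g_def by simp
    finally show ?thesis by simp
  qed
  finally show ?thesis unfolding f_def cc_def P_def .
qed

end
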